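(* Consider the setting and algorithm described in the context, and assume: (A1) bounded delay: there is an integer $\tau\ge0$ such that for every $i\in[m]$ and $t\ge0$, $i\in\mathcal{A}_t\cup\cdots\cup\mathcal{A}_{\max\{t-\tau,0\}}$; (A2) each $\mathcal{L}_j$ is differentiable with $\|\nabla\mathcal{L}_j(x)-\nabla\mathcal{L}_j(y)\|\le L\|x-y\|$; (A3) each $\mathcal{L}_j$ is strongly convex with modulus $\sigma^2>0$: $\mathcal{L}_j(x)\ge\mathcal{L}_j(y)+\langle\nabla\mathcal{L}_j(y),x-y\rangle+\frac{\sigma^2}{2}\|x-y\|^2$ for all $x,y$. Let $\delta_1>0$ satisfy $\delta_1>(2L+\rho+1)/\sigma^2$. Then for every $t\ge0$, $\frac{1}{\frac{\rho}{2}(1+\delta_1)+\delta_1}\big(F(x^{t+1},x^t)-F(x^*,x^* )\big)\le\frac{\delta_1L+\frac{\rho}{2}(1+\delta_1)}{\frac{\rho}{2}(1+\delta_1)+\delta_1}\|x^t-x^{t+1}\|^2+\frac{1}{\frac{\rho}{2}(1+\delta_1)+\delta_1}\cdot\frac{\delta_1}{2m}L^2\sum_{j\in[m]}\|x^{t_j}-x^t\|^2.$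
   Context: Problem setting: integers $m\ge 2$, $n\ge1$, $p\ge1$. For $j\in[m]$, $i\in[n]$, $l_{ji}:\mathbb{R}^p\to\mathbb{R}$ are smooth loss functions; $h:\mathbb{R}^p\to\mathbb{R}\cup\{+\infty\}$ is proper, lower semicontinuous and convex. $\mathcal{L}_j(x)=\frac1n\sum_{i}l_{ji}(x)$, $\mathcal{L}(x)=\frac1m\sum_j\mathcal{L}_j(x)+h(x)$, and $x^*$ is the minimizer of $\mathcal{L}$. Machine 1 is the master. Algorithm EDANNI: given $x^0$ and $\rho\ge0$, at each iteration $t=0,1,\dots$ there is a set $\mathcal{A}_t\subseteq[m]$ of machines whose gradients arrive at iteration $t$, with $\mathcal{A}_0=[m]$; $t_j$ is the latest iteration $s\le t$ with $j\in\mathcal{A}_s$ (with $t_1=t$). The master updates $x^{t+1}=\arg\min_{x}\ \mathcal{L}_1(x)+h(x)+\frac{\rho}{2}\|x-x^t\|^2+\Big\langle \frac1m\sum_{j\in[m]}\nabla\mathcal{L}_j(x^{t_j})-\nabla\mathcal{L}_1(x^{t_1}),\,x-x^t\Big\rangle.$ Define $F(x,y)=\frac1m\sum_{j\in[m]}\mathcal{L}_j(x)+\frac{\rho}{2}\|x-y\|^2+h(x)$, so $F(x^*,x^* )=\mathcal{L}(x^* )$. *)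

theory Defs
  imports "HOL-Analysis.Analysis"
begin

text \<open>Extended-real-valued functions h : R^p -> R \<union> {+\<infinity>} are modelled as
  functions into ereal that never take the value -\<infinity>.\<close>

definition proper_ext :: "('a \<Rightarrow> ereal) \<Rightarrow> bool" where
  "proper_ext h \<longleftrightarrow> (\<forall>x. h x \<noteq> -\<infinity>) \<and> (\<exists>x. h x \<noteq> \<infinity>)"

definition lsc_ext :: "('a::topological_space \<Rightarrow> ereal) \<Rightarrow> bool" where
  "lsc_ext h \<longleftrightarrow> (\<forall>c. closed {x. h x \<le> c})"

definition convex_ext :: "('a::real_vector \<Rightarrow> ereal) \<Rightarrow> bool" where
  "convex_ext h \<longleftrightarrow> (\<forall>x y u. 0 \<le> u \<and> u \<le> 1 \<longrightarrow>
      h ((1 - u) *\<^sub>R x + u *\<^sub>R y) \<le> ereal (1 - u) * h x + ereal u * h y)"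

definition Lloc :: "(nat \<Rightarrow> nat \<Rightarrow> 'a \<Rightarrow> real) \<Rightarrow> nat \<Rightarrow> nat \<Rightarrow> 'a \<Rightarrow> real" where
  "Lloc l n j x = (1 / real n) * (\<Sum>i\<in>{1..n}. l j i x)"

definition Lglob :: "(nat \<Rightarrow> nat \<Rightarrow> 'a \<Rightarrow> real) \<Rightarrow> ('a \<Rightarrow> ereal) \<Rightarrow> nat \<Rightarrow> nat \<Rightarrow> 'a \<Rightarrow> ereal" where
  "Lglob l h m n x = ereal ((1 / real m) * (\<Sum>j\<in>{1..m}. Lloc l n j x)) + h x"

definition Ffun :: "(nat \<Rightarrow> nat \<Rightarrow> 'a::real_normed_vector \<Rightarrow> real) \<Rightarrow> ('a \<Rightarrow> ereal) \<Rightarrow> nat \<Rightarrow> nat \<Rightarrow> real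
    \<Rightarrow> 'a \<Rightarrow> 'a \<Rightarrow> ereal" where
  "Ffun l h m n \<rho> x y = ereal ((1 / real m) * (\<Sum>j\<in>{1..m}. Lloc l n j x) + \<rho> / 2 * (norm (x - y))\<^sup>2) + h x"

text \<open>t_j: latest iteration s \<le> t with j \<in> A_s; by convention t_1 = t (machine 1 is the master).\<close>
definition tlast :: "(nat \<Rightarrow> nat set) \<Rightarrow> nat \<Rightarrow> nat \<Rightarrow> nat" where
  "tlast A t j = (if j = 1 then t else (GREATEST s. s \<le> t \<and> j \<in> A s))"

definition master_obj :: "(nat \<Rightarrow> nat \<Rightarrow> 'a::real_inner \<Rightarrow> real) \<Rightarrow> ('a \<Rightarrow> ereal) \<Rightarrow> nat \<Rightarrow> nat \<Rightarrow> real
    \<Rightarrow> (nat \<Rightarrow> 'a \<Rightarrow> 'a) \<Rightarrow> (nat \<Rightarrow> nat set) \<Rightarrow> (nat \<Rightarrow> 'a) \<Rightarrow> nat \<Rightarrow> 'a \<Rightarrow> ereal" where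
  "master_obj l h m n \<rho> G A xs t x =
     ereal (Lloc l n 1 x) + h x +
     ereal (\<rho> / 2 * (norm (x - xs t))\<^sup>2 +
       ((1 / real m) *\<^sub>R (\<Sum>j\<in>{1..m}. G j (xs (tlast A t j))) - G 1 (xs (tlast A t 1))) \<bullet> (x - xs t))"

end

theory Submission
  imports Defs
begin

lemma lim0_aux:
  fixes P K :: real
  assumes H: "\<And>u. 0 < u \<Longrightarrow> u \<le> 1 \<Longrightarrow> 0 \<le> P + u * K"
  shows "0 \<le> P"
proof (rule ccontr)
  assume P: "\<not> 0 \<le> P"
  show False
  proof (cases "K \<le> 0")
    case True
    from H[of 1] True P show False by simp
  next
    case False
    define u where "u = min 1 (- P / (2 * K))"
    have u0: "0 < u" using P False by (simp add: u_def divide_neg_pos)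
    have u1: "u \<le> 1" by (simp add: u_def)
    have "u * K \<le> (- P / (2 * K)) * K"
      using False by (intro mult_right_mono) (auto simp: u_def)
    also have "\<dots> = - P / 2" using False by (simp add: field_simps)
    finally have "P + u * K < 0" using P by simp
    with H[OF u0 u1] show False by simp
  qed
qed

lemma nq: fixes a d :: "'a::real_inner"
  shows "(norm (a + u *\<^sub>R d))\<^sup>2 = (norm a)\<^sup>2 + 2 * u * (a \<bullet> d) + u\<^sup>2 * (norm d)\<^sup>2"
  unfolding power2_norm_eq_inner
  by (simp add: inner_add_right inner_commute power2_eq_square algebra_simps)

lemma alg_aux:
  fixes s nV P R Q L m S2 \<delta> \<rho> ip ne \<Phi> :: real
  assumes s: "s > 0" and nV: "nV \<le> P * R + Q" "0 \<le> nV" and R: "R \<ge> 0" and Q: "Q \<ge> 0"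
    and P: "P = 2 * L + \<rho>" "P \<ge> 0" and m: "m > 0" and S2: "S2 \<ge> 0"
    and QS: "Q\<^sup>2 \<le> L\<^sup>2 / m * S2" and d: "(P + 1) / s \<le> \<delta>"
    and ip: "ip \<le> nV * ne" and ne: "ne \<ge> 0"
    and Phi: "\<Phi> \<le> ip - s / 2 * ne\<^sup>2 + \<rho> / 2 * R\<^sup>2"
  shows "\<Phi> \<le> (\<delta> * L + \<rho> / 2 * (1 + \<delta>)) * R\<^sup>2 + \<delta> / (2 * m) * L\<^sup>2 * S2"
proof -
  have e1: "nV * ne - s / 2 * ne\<^sup>2 = (nV\<^sup>2 - (nV - s * ne)\<^sup>2) / (2 * s)"
    using s by (simp add: field_simps power2_eq_square)
  have "(nV\<^sup>2 - (nV - s * ne)\<^sup>2) / (2 * s) \<le> nV\<^sup>2 / (2 * s)"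
    using s by (intro divide_right_mono) auto
  with e1 ip have s1: "ip - s / 2 * ne\<^sup>2 \<le> nV\<^sup>2 / (2 * s)" by linarith
  have "nV\<^sup>2 \<le> (P * R + Q)\<^sup>2" using nV by (intro power_mono) auto
  hence s2: "nV\<^sup>2 / (2 * s) \<le> (P * R + Q)\<^sup>2 / (2 * s)" using s by (simp add: divide_right_mono)
  have "(P * R + Q)\<^sup>2 \<le> (P + 1) * (P * R\<^sup>2 + Q\<^sup>2)"
  proof -
    have "0 \<le> P * (R - Q)\<^sup>2" using P by simp
    thus ?thesis by (simp add: power2_eq_square algebra_simps)
  qed
  hence s3: "(P * R + Q)\<^sup>2 / (2 * s) \<le> ((P + 1) / s) * (P * R\<^sup>2 + Q\<^sup>2) / 2"
    using s by (simp add: divide_right_mono mult.commute)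
  have s4: "((P + 1) / s) * (P * R\<^sup>2 + Q\<^sup>2) / 2 \<le> \<delta> * (P * R\<^sup>2 + L\<^sup>2 / m * S2) / 2"
  proof -
    have "(P + 1) / s \<ge> 0" using P s by simp
    moreover have "P * R\<^sup>2 + Q\<^sup>2 \<le> P * R\<^sup>2 + L\<^sup>2 / m * S2" using QS by simp
    moreover have "0 \<le> P * R\<^sup>2 + Q\<^sup>2" using P by simp
    ultimately have "((P + 1) / s) * (P * R\<^sup>2 + Q\<^sup>2) \<le> \<delta> * (P * R\<^sup>2 + L\<^sup>2 / m * S2)"
      using d by (meson mult_mono order_trans)
    thus ?thesis by simp
  qed
  from Phi s1 s2 s3 s4 have "\<Phi> \<le> \<delta> * (P * R\<^sup>2 + L\<^sup>2 / m * S2) / 2 + \<rho> / 2 * R\<^sup>2" by linarith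
  also have "\<dots> = (\<delta> * L + \<rho> / 2 * (1 + \<delta>)) * R\<^sup>2 + \<delta> / (2 * m) * L\<^sup>2 * S2"
    using m by (simp add: P field_simps)
  finally show ?thesis .
qed

theorem lemma4:
  fixes m n :: nat and l :: "nat \<Rightarrow> nat \<Rightarrow> 'a::euclidean_space \<Rightarrow> real"
    and h :: "'a \<Rightarrow> ereal" and G :: "nat \<Rightarrow> 'a \<Rightarrow> 'a"
    and xstar :: 'a and xs :: "nat \<Rightarrow> 'a" and A :: "nat \<Rightarrow> nat set"
    and \<rho> L \<sigma> \<delta>\<^sub>1 :: real and \<tau> :: nat
  assumes m: "m \<ge> 2" and n: "n \<ge> 1"
    and l_diff: "\<And>j i x. j \<in> {1..m} \<Longrightarrow> i \<in> {1..n} \<Longrightarrow> l j i differentiable (at x)"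
    and h_proper: "proper_ext h" and h_lsc: "lsc_ext h" and h_convex: "convex_ext h"
    and xstar_min: "\<And>x. Lglob l h m n xstar \<le> Lglob l h m n x"
    and rho: "\<rho> \<ge> 0"
    and A_sub: "\<And>t. A t \<subseteq> {1..m}" and A0: "A 0 = {1..m}"
    and update: "\<And>t y. master_obj l h m n \<rho> G A xs t (xs (Suc t)) \<le> master_obj l h m n \<rho> G A xs t y"
    and A1: "\<And>i t. i \<in> {1..m} \<Longrightarrow> \<exists>s\<in>{t - \<tau>..t}. i \<in> A s"
    and grad: "\<And>j x. j \<in> {1..m} \<Longrightarrow> (Lloc l n j has_derivative (\<lambda>v. G j x \<bullet> v)) (at x)"
    and A2: "\<And>j x y. j \<in> {1..m} \<Longrightarrow> norm (G j x - G j y) \<le> L * norm (x - y)"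
    and sigma: "\<sigma>\<^sup>2 > 0"
    and A3: "\<And>j x y. j \<in> {1..m} \<Longrightarrow>
               Lloc l n j x \<ge> Lloc l n j y + G j y \<bullet> (x - y) + \<sigma>\<^sup>2 / 2 * (norm (x - y))\<^sup>2"
    and delta_pos: "\<delta>\<^sub>1 > 0" and delta_big: "\<delta>\<^sub>1 > (2 * L + \<rho> + 1) / \<sigma>\<^sup>2"
  shows "ereal (1 / (\<rho> / 2 * (1 + \<delta>\<^sub>1) + \<delta>\<^sub>1)) *
           (Ffun l h m n \<rho> (xs (Suc t)) (xs t) - Ffun l h m n \<rho> xstar xstar)
         \<le> ereal ((\<delta>\<^sub>1 * L + \<rho> / 2 * (1 + \<delta>\<^sub>1)) / (\<rho> / 2 * (1 + \<delta>\<^sub>1) + \<delta>\<^sub>1) * (norm (xs t - xs (Suc t)))\<^sup>2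
             + 1 / (\<rho> / 2 * (1 + \<delta>\<^sub>1) + \<delta>\<^sub>1) * (\<delta>\<^sub>1 / (2 * real m)) * L\<^sup>2
                 * (\<Sum>j\<in>{1..m}. (norm (xs (tlast A t j) - xs t))\<^sup>2))"
proof -
  define x where "x = xs (Suc t)"
  define y where "y = xs t"
  define w where "w j = xs (tlast A t j)" for j
  define f where "f z = (1 / real m) * (\<Sum>j\<in>{1..m}. Lloc l n j z)" for z
  define g where "g = (1 / real m) *\<^sub>R (\<Sum>j\<in>{1..m}. G j (w j)) - G 1 (w 1)"
  define hr where "hr z = real_of_ereal (h z)" for z
  define s where "s = \<sigma>\<^sup>2"
  have s0: "s > 0" using sigma by (simp add: s_def)
  have m0: "real m > 0" using m by simp
  have w1: "w 1 = y" by (simp add: w_def tlast_def y_def)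
  have hninf: "\<And>z. h z \<noteq> -\<infinity>" using h_proper by (simp add: proper_ext_def)
  obtain z0 where z0: "h z0 \<noteq> \<infinity>" using h_proper by (auto simp: proper_ext_def)
  have hfin: "\<And>z. h z \<noteq> \<infinity> \<Longrightarrow> h z = ereal (hr z)"
    using hninf by (case_tac "h z") (auto simp: hr_def)
  have mo: "\<And>z. master_obj l h m n \<rho> G A xs t z
      = ereal (Lloc l n 1 z) + h z + ereal (\<rho> / 2 * (norm (z - y))\<^sup>2 + g \<bullet> (z - y))"
    by (simp add: master_obj_def g_def w_def y_def)
  have upd: "\<And>z. master_obj l h m n \<rho> G A xs t x \<le> master_obj l h m n \<rho> G A xs t z"
    using update by (simp add: x_def)
  have hx: "h x \<noteq> \<infinity>"
  proof
    assume "h x = \<infinity>"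
    with upd[of z0] have "\<infinity> \<le> master_obj l h m n \<rho> G A xs t z0" by (simp add: mo)
    thus False using hfin[OF z0] by (simp add: mo)
  qed
  have hxs: "h xstar \<noteq> \<infinity>"
  proof
    assume "h xstar = \<infinity>"
    with xstar_min[of z0] have "\<infinity> \<le> Lglob l h m n z0" by (simp add: Lglob_def)
    thus False using hfin[OF z0] by (simp add: Lglob_def)
  qed
  have L0: "L \<ge> 0"
  proof -
    obtain b :: 'a where b: "b \<in> Basis" using nonempty_Basis by blast
    have "norm (G 1 b - G 1 0) \<le> L * norm (b - 0)" by (rule A2) (use m in simp)
    hence "0 \<le> L * norm b" by (metis norm_ge_zero order_trans diff_zero)
    thus ?thesis using b by (simp add: zero_le_mult_iff)
  qed
  define d where "d = xstar - x"
  have FO: "0 \<le> (G 1 x + \<rho> *\<^sub>R (x - y) + g) \<bullet> d + (hr xstar - hr x)"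
  proof (rule lim0_aux[where K = "(L + \<rho> / 2) * (norm d)\<^sup>2"])
    fix u :: real assume u0: "0 < u" and u1: "u \<le> 1"
    define z where "z = (1 - u) *\<^sub>R x + u *\<^sub>R xstar"
    have zx: "z = x + u *\<^sub>R d" by (simp add: z_def d_def algebra_simps)
    have "h z \<le> ereal (1 - u) * h x + ereal u * h xstar"
      using h_convex u0 u1 by (simp add: convex_ext_def z_def)
    also have "\<dots> = ereal ((1 - u) * hr x + u * hr xstar)"
      using hfin[OF hx] hfin[OF hxs] by simp
    finally have hz1: "h z \<le> ereal ((1 - u) * hr x + u * hr xstar)" .
    hence hz: "h z \<noteq> \<infinity>" by auto
    have hz2: "hr z \<le> (1 - u) * hr x + u * hr xstar" using hz1 hfin[OF hz] by simp
    have "master_obj l h m n \<rho> G A xs t x \<le> master_obj l h m n \<rho> G A xs t z" by (rule upd)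
    hence opt: "Lloc l n 1 x + hr x + (\<rho> / 2 * (norm (x - y))\<^sup>2 + g \<bullet> (x - y))
        \<le> Lloc l n 1 z + hr z + (\<rho> / 2 * (norm (z - y))\<^sup>2 + g \<bullet> (z - y))"
      using hfin[OF hx] hfin[OF hz] by (simp add: mo)
    have c1: "Lloc l n 1 x \<ge> Lloc l n 1 z + G 1 z \<bullet> (x - z) + \<sigma>\<^sup>2 / 2 * (norm (x - z))\<^sup>2"
      by (rule A3) (use m in simp)
    have c1': "Lloc l n 1 z - Lloc l n 1 x \<le> u * (G 1 z \<bullet> d)"
    proof -
      have "0 \<le> \<sigma>\<^sup>2 / 2 * (norm (x - z))\<^sup>2" by simp
      moreover have "G 1 z \<bullet> (x - z) = - (u * (G 1 z \<bullet> d))" by (simp add: zx)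
      ultimately show ?thesis using c1 by linarith
    qed
    have c2: "G 1 z \<bullet> d \<le> G 1 x \<bullet> d + L * u * (norm d)\<^sup>2"
    proof -
      have "(G 1 z - G 1 x) \<bullet> d \<le> norm (G 1 z - G 1 x) * norm d" by (rule norm_cauchy_schwarz)
      also have "\<dots> \<le> L * norm (z - x) * norm d" by (intro mult_right_mono A2) (use m in auto)
      also have "norm (z - x) = u * norm d" using u0 by (simp add: zx)
      finally show ?thesis by (simp add: inner_diff_left power2_eq_square algebra_simps)
    qed
    have q: "(norm (z - y))\<^sup>2 = (norm (x - y))\<^sup>2 + 2 * u * ((x - y) \<bullet> d) + u\<^sup>2 * (norm d)\<^sup>2"
    proof -
      have e: "z - y = (x - y) + u *\<^sub>R d" by (simp add: zx algebra_simps)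
      show ?thesis unfolding e by (rule nq)
    qed
    have gq: "g \<bullet> (z - y) = g \<bullet> (x - y) + u * (g \<bullet> d)"
      by (simp add: zx inner_add_right inner_diff_right algebra_simps)
    have key: "0 \<le> u * ((G 1 x + \<rho> *\<^sub>R (x - y) + g) \<bullet> d + (hr xstar - hr x) + u * ((L + \<rho> / 2) * (norm d)\<^sup>2))"
    proof -
      have "0 \<le> (Lloc l n 1 z - Lloc l n 1 x) + (hr z - hr x) + \<rho> / 2 * ((norm (z - y))\<^sup>2 - (norm (x - y))\<^sup>2) + (g \<bullet> (z - y) - g \<bullet> (x - y))"
        using opt by (simp add: algebra_simps)
      also have "\<dots> \<le> u * (G 1 x \<bullet> d + L * u * (norm d)\<^sup>2) + u * (hr xstar - hr x) + \<rho> / 2 * (2 * u * ((x - y) \<bullet> d) + u\<^sup>2 * (norm d)\<^sup>2) + u * (g \<bullet> d)"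
      proof -
        have B: "u * (G 1 z \<bullet> d) \<le> u * (G 1 x \<bullet> d + L * u * (norm d)\<^sup>2)" using c2 u0 by simp
        have C: "hr z - hr x \<le> u * (hr xstar - hr x)" using hz2 by (simp add: algebra_simps)
        have D: "\<rho> / 2 * ((norm (z - y))\<^sup>2 - (norm (x - y))\<^sup>2) = \<rho> / 2 * (2 * u * ((x - y) \<bullet> d) + u\<^sup>2 * (norm d)\<^sup>2)"
          using q by simp
        have E: "g \<bullet> (z - y) - g \<bullet> (x - y) = u * (g \<bullet> d)" using gq by simp
        show ?thesis using c1' B C D E by linarith
      qed
      also have "\<dots> = u * ((G 1 x + \<rho> *\<^sub>R (x - y) + g) \<bullet> d + (hr xstar - hr x) + u * ((L + \<rho> / 2) * (norm d)\<^sup>2))"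
        by (simp add: inner_add_left power2_eq_square algebra_simps)
      finally show ?thesis .
    qed
    show "0 \<le> (G 1 x + \<rho> *\<^sub>R (x - y) + g) \<bullet> d + (hr xstar - hr x) + u * ((L + \<rho> / 2) * (norm d)\<^sup>2)"
      using key u0 by (simp add: zero_le_mult_iff)
  qed
  define e where "e = x - xstar"
  define R where "R = norm (x - y)"
  define sj where "sj j = norm (w j - y)" for j
  define S2 where "S2 = (\<Sum>j\<in>{1..m}. (sj j)\<^sup>2)"
  define Q where "Q = L / real m * (\<Sum>j\<in>{1..m}. sj j)"
  define P where "P = 2 * L + \<rho>"
  define V where "V = (1 / real m) *\<^sub>R (\<Sum>j\<in>{1..m}. G j x) - (G 1 x + \<rho> *\<^sub>R (x - y) + g)"
  define Phi where "Phi = f x + \<rho> / 2 * R\<^sup>2 + hr x - (f xstar + hr xstar)"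
  have fdiff: "f x - f xstar \<le> ((1 / real m) *\<^sub>R (\<Sum>j\<in>{1..m}. G j x)) \<bullet> e - s / 2 * (norm e)\<^sup>2"
  proof -
    have each: "Lloc l n j x - Lloc l n j xstar \<le> G j x \<bullet> e - s / 2 * (norm e)\<^sup>2" if j: "j \<in> {1..m}" for j
    proof -
      have "Lloc l n j xstar \<ge> Lloc l n j x + G j x \<bullet> (xstar - x) + \<sigma>\<^sup>2 / 2 * (norm (xstar - x))\<^sup>2"
        by (rule A3[OF j])
      moreover have "G j x \<bullet> (xstar - x) = - (G j x \<bullet> e)" by (simp add: e_def inner_diff_right)
      moreover have "norm (xstar - x) = norm e" by (simp add: e_def norm_minus_commute)
      ultimately show ?thesis by (simp add: s_def)
    qed
    have "(\<Sum>j\<in>{1..m}. Lloc l n j x - Lloc l n j xstar) \<le> (\<Sum>j\<in>{1..m}. G j x \<bullet> e - s / 2 * (norm e)\<^sup>2)"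
      by (rule sum_mono) (rule each)
    also have "\<dots> = (\<Sum>j\<in>{1..m}. G j x) \<bullet> e - real m * (s / 2 * (norm e)\<^sup>2)"
      by (simp add: sum_subtractf inner_sum_left)
    finally have "(1 / real m) * (\<Sum>j\<in>{1..m}. Lloc l n j x - Lloc l n j xstar)
        \<le> (1 / real m) * ((\<Sum>j\<in>{1..m}. G j x) \<bullet> e - real m * (s / 2 * (norm e)\<^sup>2))"
      using m0 by (intro mult_left_mono) auto
    thus ?thesis using m0 by (simp add: f_def sum_subtractf right_diff_distrib)
  qed
  have de: "d = - e" by (simp add: d_def e_def)
  have hdiff: "hr x - hr xstar \<le> - ((G 1 x + \<rho> *\<^sub>R (x - y) + g) \<bullet> e)"
    using FO unfolding de inner_minus_right by linarith
  have PhiV: "Phi \<le> V \<bullet> e - s / 2 * (norm e)\<^sup>2 + \<rho> / 2 * R\<^sup>2"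
    using fdiff hdiff unfolding Phi_def V_def inner_diff_left by linarith
  have ip: "V \<bullet> e \<le> norm V * norm e" by (rule norm_cauchy_schwarz)
  have Veq: "V = (1 / real m) *\<^sub>R (\<Sum>j\<in>{1..m}. G j x - G j (w j)) - (G 1 x - G 1 y) - \<rho> *\<^sub>R (x - y)"
    using w1 by (simp add: V_def g_def sum_subtractf scaleR_diff_right algebra_simps)
  have nV: "norm V \<le> P * R + Q"
  proof -
    have sumeq: "(\<Sum>j\<in>{1..m}. L * (R + sj j)) = real m * (L * R) + L * (\<Sum>j\<in>{1..m}. sj j)"
      by (simp add: distrib_left sum.distrib sum_distrib_left)
    have t1: "norm ((1 / real m) *\<^sub>R (\<Sum>j\<in>{1..m}. G j x - G j (w j))) \<le> L * R + Q"
    proof -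
      have "norm ((1 / real m) *\<^sub>R (\<Sum>j\<in>{1..m}. G j x - G j (w j)))
          = (1 / real m) * norm (\<Sum>j\<in>{1..m}. G j x - G j (w j))" using m0 by simp
      also have "\<dots> \<le> (1 / real m) * (\<Sum>j\<in>{1..m}. L * (R + sj j))"
      proof (rule mult_left_mono)
        show "norm (\<Sum>j\<in>{1..m}. G j x - G j (w j)) \<le> (\<Sum>j\<in>{1..m}. L * (R + sj j))"
        proof (rule order_trans[OF norm_sum sum_mono])
          fix j assume j: "j \<in> {1..m}"
          have "norm (G j x - G j (w j)) \<le> L * norm (x - w j)" by (rule A2[OF j])
          also have "norm (x - w j) \<le> R + sj j" unfolding R_def sj_def
            using norm_triangle_ineq4[of "x - y" "w j - y"] by simp
          hence "L * norm (x - w j) \<le> L * (R + sj j)" using L0 by (rule mult_left_mono)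
          finally show "norm (G j x - G j (w j)) \<le> L * (R + sj j)" .
        qed
      qed (use m0 in simp)
      also have "\<dots> = L * R + Q" unfolding sumeq Q_def using m0 by (simp add: field_simps)
      finally show ?thesis .
    qed
    have t2: "norm (G 1 x - G 1 y) \<le> L * R" unfolding R_def by (rule A2) (use m in simp)
    have t3: "norm (\<rho> *\<^sub>R (x - y)) = \<rho> * R" using rho by (simp add: R_def)
    have "norm V \<le> norm ((1 / real m) *\<^sub>R (\<Sum>j\<in>{1..m}. G j x - G j (w j))) + norm (G 1 x - G 1 y) + norm (\<rho> *\<^sub>R (x - y))"
      unfolding Veq by (rule order_trans[OF norm_triangle_ineq4 add_right_mono[OF norm_triangle_ineq4]])
    thus ?thesis using t1 t2 t3 by (simp add: P_def algebra_simps)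
  qed
  have QS: "Q\<^sup>2 \<le> L\<^sup>2 / real m * S2"
  proof -
    have "Q\<^sup>2 = (L / real m)\<^sup>2 * (\<Sum>j\<in>{1..m}. sj j)\<^sup>2" unfolding Q_def by (simp add: power_mult_distrib power_divide)
    also have "\<dots> \<le> (L / real m)\<^sup>2 * (S2 * real m)"
      using sum_squared_le_sum_of_squares[of sj "{1..m}"] by (intro mult_left_mono) (simp_all add: S2_def)
    also have "\<dots> = L\<^sup>2 / real m * S2" using m0 by (simp add: power2_eq_square field_simps)
    finally show ?thesis .
  qed
  have Q0: "Q \<ge> 0" using L0 m0 by (simp add: Q_def sj_def sum_nonneg)
  have S20: "S2 \<ge> 0" by (simp add: S2_def sum_nonneg)
  have dd: "(P + 1) / s \<le> \<delta>\<^sub>1" using delta_big by (simp add: P_def s_def)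
  have P0: "P \<ge> 0" using L0 rho by (simp add: P_def)
  have main: "Phi \<le> (\<delta>\<^sub>1 * L + \<rho> / 2 * (1 + \<delta>\<^sub>1)) * R\<^sup>2 + \<delta>\<^sub>1 / (2 * real m) * L\<^sup>2 * S2"
    by (rule alg_aux[OF s0 nV norm_ge_zero _ Q0 P_def P0 m0 S20 QS dd ip norm_ge_zero PhiV]) (simp add: R_def)
  define c where "c = \<rho> / 2 * (1 + \<delta>\<^sub>1) + \<delta>\<^sub>1"
  have cpos: "c > 0" using rho delta_pos by (simp add: c_def add_nonneg_pos)
  have fin: "1 / c * Phi \<le> (\<delta>\<^sub>1 * L + \<rho> / 2 * (1 + \<delta>\<^sub>1)) / c * R\<^sup>2 + 1 / c * (\<delta>\<^sub>1 / (2 * real m)) * L\<^sup>2 * S2"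
  proof -
    have "1 / c * Phi \<le> 1 / c * ((\<delta>\<^sub>1 * L + \<rho> / 2 * (1 + \<delta>\<^sub>1)) * R\<^sup>2 + \<delta>\<^sub>1 / (2 * real m) * L\<^sup>2 * S2)"
      using main cpos by (intro mult_left_mono) auto
    also have "\<dots> = (\<delta>\<^sub>1 * L + \<rho> / 2 * (1 + \<delta>\<^sub>1)) / c * R\<^sup>2 + 1 / c * (\<delta>\<^sub>1 / (2 * real m)) * L\<^sup>2 * S2"
      using cpos by (simp add: field_simps)
    finally show ?thesis .
  qed
  have Req: "R = norm (xs t - xs (Suc t))" by (simp add: R_def x_def y_def norm_minus_commute)
  have S2eq: "S2 = (\<Sum>j\<in>{1..m}. (norm (xs (tlast A t j) - xs t))\<^sup>2)" by (simp add: S2_def sj_def w_def y_def)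
  have Fx: "Ffun l h m n \<rho> (xs (Suc t)) (xs t) = ereal (f x + \<rho> / 2 * R\<^sup>2 + hr x)"
    using hfin[OF hx] by (simp add: Ffun_def f_def R_def x_def y_def)
  have Fs: "Ffun l h m n \<rho> xstar xstar = ereal (f xstar + hr xstar)"
    using hfin[OF hxs] by (simp add: Ffun_def f_def)
  show ?thesis unfolding Fx Fs using fin by (simp add: Phi_def Req S2eq c_def)
qed

end
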